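(* Let $d\ge2$ and let $K\subset\mathbb R^d$ be a convex polytope with $2d$ corners, namely the convex hull of the endpoints of its $d$ diameters, with diameters $0<l_d\le\dots\le l_1<\infty$ (i.e. $D_K^{(i)}=l_i$). Then there exists a box $B\subset K$ which is congruent to $\prod_{i=1}^d[0,2^{-2(d-1)}l_i]$.
   Context: Diameters of a convex body: for a convex body $K\subset\mathbb R^d$, $D_K^{(1)}:=\operatorname{diam}(K)=\max\{|x-y|:x,y\in K\}$, with orientation $p_K^{(1)}=\frac{x-y}{|x-y|}$ for a maximizing pair $x,y$. Let $H_{p^{(1)}_K}$ be the hyperplane through the origin perpendicular to $p^{(1)}_K$ and $D_K^{(2)}:=\operatorname{diam}(P_{H_{p^{(1)}_K}}(K))$, $P_H$ orthogonal projection onto $H$, with orientation $p^{(2)}_K\in H_{p^{(1)}_K}$; iteratively, $H_{p^{(i)}_K}$ is the hyperplane within $H_{p^{(i-1)}_K}$ perpendicular to $p^{(i)}_K$, and $D_K^{(i+1)}:=\operatorname{diam}(P_{H_{p^{(i)}_K}}(K))$. The $2d$ "corners" of the polytope are the endpoints (in $K$) of the segments realizing these $d$ diameters, and $K$ is their convex hull. *)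

theory Defs
  imports "HOL-Analysis.Analysis"
begin

text \<open>The subspace H after removing the first i orientations p 0, ..., p (i-1)
  (indices shifted to start at 0): H 0 is the whole space.\<close>
definition perp_sub :: "(nat \<Rightarrow> 'a::euclidean_space) \<Rightarrow> nat \<Rightarrow> 'a set" where
  "perp_sub p i = {v. \<forall>j<i. p j \<bullet> v = 0}"

definition proj_onto :: "'a::euclidean_space set \<Rightarrow> 'a \<Rightarrow> 'a" where
  "proj_onto H v = closest_point H v"

text \<open>Iterated diameters of K: for i < DIM('a), x i, y i are points of K whose
  projections onto perp_sub p i realise the diameter l i of the projection of K,
  and p i is the corresponding orientation (unit vector).\<close>
definition diameter_data ::
  "'a::euclidean_space set \<Rightarrow> (nat \<Rightarrow> 'a) \<Rightarrow> (nat \<Rightarrow> 'a) \<Rightarrow> (nat \<Rightarrow> real) \<Rightarrow> (nat \<Rightarrow> 'a) \<Rightarrow> bool"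
  where
  "diameter_data K x y l p \<longleftrightarrow>
     (\<forall>i<DIM('a).
        x i \<in> K \<and> y i \<in> K \<and>
        l i = diameter (proj_onto (perp_sub p i) ` K) \<and>
        l i = norm (proj_onto (perp_sub p i) (x i) - proj_onto (perp_sub p i) (y i)) \<and>
        p i = (proj_onto (perp_sub p i) (x i) - proj_onto (perp_sub p i) (y i)) /\<^sub>R l i)"

end

theory Submission
  imports Defs
begin

lemma perp_sub_closed: "closed (perp_sub p i)"
proof -
  have "perp_sub p i = (\<Inter>j\<in>{..<i}. {v. p j \<bullet> v = 0})" by (auto simp: perp_sub_def)
  then show ?thesis by (auto intro!: closed_INT closed_hyperplane)
qed

lemma perp_sub_subspace: "subspace (perp_sub p i)"
  by (auto simp: perp_sub_def subspace_def inner_add_right)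

lemma perp_sub_convex: "convex (perp_sub p i)"
  by (simp add: perp_sub_subspace subspace_imp_convex)

lemma perp_sub_ne: "perp_sub p i \<noteq> {}"
  by (auto simp: perp_sub_def intro!: exI[of _ 0])

lemma proj_in: "proj_onto (perp_sub p i) v \<in> perp_sub p i"
  unfolding proj_onto_def by (rule closest_point_in_set[OF perp_sub_closed perp_sub_ne])

lemma proj_orth:
  assumes h: "h \<in> perp_sub p i"
  shows "h \<bullet> v = h \<bullet> proj_onto (perp_sub p i) v"
proof -
  let ?H = "perp_sub p i" let ?P = "proj_onto ?H v"
  have P: "?P \<in> ?H" by (rule proj_in)
  have "?P + h \<in> ?H" "?P - h \<in> ?H" using P h perp_sub_subspace[of p i]
    by (auto intro: subspace_add subspace_diff)
  then have "inner (v - ?P) ((?P + h) - ?P) \<le> 0" "inner (v - ?P) ((?P - h) - ?P) \<le> 0"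
    unfolding proj_onto_def
    using closest_point_dot[OF perp_sub_convex perp_sub_closed, of "?P + h" p i v]
      closest_point_dot[OF perp_sub_convex perp_sub_closed, of "?P - h" p i v]
    by (auto simp: proj_onto_def)
  then have "inner (v - ?P) h = 0" by (simp add: inner_diff_right)
  then show ?thesis by (simp add: inner_diff_right inner_commute)
qed

lemma perp_sub_mono: "i \<le> j \<Longrightarrow> perp_sub p j \<subseteq> perp_sub p i"
  by (auto simp: perp_sub_def)

lemma proj_bounded:
  assumes "compact K" shows "bounded (proj_onto (perp_sub p i) ` K)"
proof -
  have "continuous_on K (proj_onto (perp_sub p i))"
    unfolding proj_onto_def
    by (intro continuous_on_subset[OF continuous_on_closest_point] perp_sub_convex perp_sub_closed perp_sub_ne) auto
  then show ?thesis using assms compact_continuous_image compact_imp_bounded by blast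
qed

lemma backsub:
  fixes l \<delta> :: "nat \<Rightarrow> real" and E :: "nat \<Rightarrow> nat \<Rightarrow> real" and \<gamma> :: real
  assumes lpos: "\<And>i. i<n \<Longrightarrow> l i > 0"
    and Eb: "\<And>i j. i<j \<Longrightarrow> j<n \<Longrightarrow> \<bar>E i j\<bar> \<le> l i"
    and db: "\<And>i. i<n \<Longrightarrow> \<bar>\<delta> i\<bar> \<le> \<gamma> * l i"
    and g0: "\<gamma> \<ge> 0"
  shows "\<exists>r. \<forall>i<n. l i * r i + (\<Sum>j\<in>{i<..<n}. E i j * r j) = \<delta> i \<and> \<bar>r i\<bar> \<le> \<gamma> * 2^(n-1)"
proof -
  have "k \<le> n \<Longrightarrow> \<exists>r. (\<forall>i. n-k \<le> i \<and> i<n \<longrightarrow> l i * r i + (\<Sum>j\<in>{i<..<n}. E i j * r j) = \<delta> i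
            \<and> \<bar>r i\<bar> \<le> \<gamma>*2^(n-1)) \<and> (\<Sum>j\<in>{n-k..<n}. \<bar>r j\<bar>) \<le> \<gamma>*(2^k - 1)" for k
  proof (induction k)
    case 0 show ?case by (intro exI[of _ "\<lambda>_. 0"]) simp
  next
    case (Suc k)
    then obtain r where r: "\<forall>i. n-k \<le> i \<and> i<n \<longrightarrow> l i * r i + (\<Sum>j\<in>{i<..<n}. E i j * r j) = \<delta> i
            \<and> \<bar>r i\<bar> \<le> \<gamma>*2^(n-1)" and rs: "(\<Sum>j\<in>{n-k..<n}. \<bar>r j\<bar>) \<le> \<gamma>*(2^k - 1)" by auto
    define i where "i = n - Suc k"
    have i: "i < n" "Suc i = n - k" "{i<..<n} = {n-k..<n}" "{n - Suc k..<n} = insert i {n-k..<n}"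
      using Suc.prems by (auto simp: i_def)
    have li: "l i > 0" using lpos i by auto
    define v where "v = (\<delta> i - (\<Sum>j\<in>{i<..<n}. E i j * r j)) / l i"
    define r' where "r' = r(i := v)"
    have same: "\<And>j. j \<in> {i<..<n} \<Longrightarrow> r' j = r j" by (auto simp: r'_def)
    have same2: "\<And>j. j \<in> {n-k..<n} \<Longrightarrow> r' j = r j" using same i by auto
    have eqi: "l i * v + (\<Sum>j\<in>{i<..<n}. E i j * r j) = \<delta> i" using li by (simp add: v_def field_simps)
    have "\<bar>\<Sum>j\<in>{i<..<n}. E i j * r j\<bar> \<le> (\<Sum>j\<in>{i<..<n}. \<bar>E i j * r j\<bar>)" by (rule sum_abs)
    also have "\<dots> \<le> (\<Sum>j\<in>{i<..<n}. l i * \<bar>r j\<bar>)"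
      by (intro sum_mono) (auto simp: abs_mult intro!: mult_right_mono Eb)
    also have "\<dots> = l i * (\<Sum>j\<in>{n-k..<n}. \<bar>r j\<bar>)" by (simp add: sum_distrib_left i(3))
    also have "\<dots> \<le> l i * (\<gamma>*(2^k - 1))" using rs li by simp
    finally have S: "\<bar>\<Sum>j\<in>{i<..<n}. E i j * r j\<bar> \<le> l i * (\<gamma>*(2^k - 1))" .
    have "l i * \<bar>v\<bar> = \<bar>\<delta> i - (\<Sum>j\<in>{i<..<n}. E i j * r j)\<bar>" using li by (simp add: v_def abs_div)
    also have "\<dots> \<le> \<gamma> * l i + l i * (\<gamma>*(2^k - 1))" using S db[OF i(1)] by linarith
    also have "\<dots> = l i * (\<gamma> * 2^k)" by (simp add: algebra_simps)
    finally have vb: "\<bar>v\<bar> \<le> \<gamma> * 2^k" using li by simp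
    have "(2::real)^k \<le> 2^(n-1)" using i by (intro power_increasing) auto
    then have vb2: "\<bar>v\<bar> \<le> \<gamma> * 2^(n-1)" using vb g0 by (meson mult_left_mono order_trans)
    show ?case
    proof (rule exI[of _ r'], rule conjI, intro allI impI)
      fix j assume j: "n - Suc k \<le> j \<and> j < n"
      show "l j * r' j + (\<Sum>j'\<in>{j<..<n}. E j j' * r' j') = \<delta> j \<and> \<bar>r' j\<bar> \<le> \<gamma>*2^(n-1)"
      proof (cases "j = i")
        case True
        have "(\<Sum>j'\<in>{i<..<n}. E i j' * r' j') = (\<Sum>j'\<in>{i<..<n}. E i j' * r j')"
          using same by (intro sum.cong) auto
        then show ?thesis using eqi vb2 True by (simp add: r'_def)
      next
        case False
        then have j2: "n - k \<le> j" "j < n" using j i by auto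
        have "(\<Sum>j'\<in>{j<..<n}. E j j' * r' j') = (\<Sum>j'\<in>{j<..<n}. E j j' * r j')"
          using j2 i by (intro sum.cong) (auto simp: r'_def)
        then show ?thesis using r j2 False by (simp add: r'_def)
      qed
    next
      have "(\<Sum>j\<in>{n - Suc k..<n}. \<bar>r' j\<bar>) = \<bar>v\<bar> + (\<Sum>j\<in>{n-k..<n}. \<bar>r' j\<bar>)"
        using i by (simp add: r'_def)
      also have "\<dots> = \<bar>v\<bar> + (\<Sum>j\<in>{n-k..<n}. \<bar>r j\<bar>)" using same2 by simp
      also have "\<dots> \<le> \<gamma> * 2^k + \<gamma>*(2^k - 1)" using vb rs by linarith
      also have "\<dots> = \<gamma>*(2^Suc k - 1)" by (simp add: algebra_simps)
      finally show "(\<Sum>j\<in>{n - Suc k..<n}. \<bar>r' j\<bar>) \<le> \<gamma>*(2^Suc k - 1)" .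
    qed
  qed
  from this[of n] show ?thesis by auto
qed

theorem lemma1:
  fixes K :: "'a::euclidean_space set"
    and x y p :: "nat \<Rightarrow> 'a" and l :: "nat \<Rightarrow> real"
  assumes "DIM('a) \<ge> 2"
    and "diameter_data K x y l p"
    and "K = convex hull ((x ` {..<DIM('a)}) \<union> (y ` {..<DIM('a)}))"
    and "0 < l (DIM('a) - 1)"
    and "\<forall>i j. i \<le> j \<and> j < DIM('a) \<longrightarrow> l j \<le> l i"
  shows "\<exists>a u. (\<forall>i<DIM('a). \<forall>j<DIM('a). u i \<bullet> u j = (if i = j then 1 else 0)) \<and>
           {a + (\<Sum>i<DIM('a). t i *\<^sub>R u i) | t.
              \<forall>i<DIM('a). 0 \<le> t i \<and> t i \<le> l i / 2 ^ (2 * (DIM('a) - 1))} \<subseteq> K"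
proof -
  define d where "d = DIM('a)"
  note dd = assms(2)[unfolded diameter_data_def, folded d_def]
  define P where "P i = proj_onto (perp_sub p i)" for i
  have d2: "d \<ge> 2" using assms(1) by (simp add: d_def)
  have xK: "\<And>i. i<d \<Longrightarrow> x i \<in> K" and yK: "\<And>i. i<d \<Longrightarrow> y i \<in> K" using dd by auto
  have ldiam: "\<And>i. i<d \<Longrightarrow> l i = diameter (P i ` K)" using dd by (auto simp: P_def)
  have lnorm: "\<And>i. i<d \<Longrightarrow> l i = norm (P i (x i) - P i (y i))" using dd by (auto simp: P_def)
  have pdef: "\<And>i. i<d \<Longrightarrow> p i = (P i (x i) - P i (y i)) /\<^sub>R l i" using dd by (auto simp: P_def)
  have lpos: "\<And>i. i<d \<Longrightarrow> l i > 0"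
  proof -
    fix i assume "i < d"
    then have "l (d-1) \<le> l i" using assms(5) d2 by (auto simp: d_def)
    then show "l i > 0" using assms(4) by (simp add: d_def)
  qed
  have Pdiff: "\<And>i. i<d \<Longrightarrow> P i (x i) - P i (y i) = l i *\<^sub>R p i"
  proof -
    fix i assume i: "i<d"
    then have "l i \<noteq> 0" using lpos by force
    then show "P i (x i) - P i (y i) = l i *\<^sub>R p i" using pdef[OF i] by simp
  qed
  have pin: "\<And>i. i<d \<Longrightarrow> p i \<in> perp_sub p i"
  proof -
    fix i assume i: "i<d"
    have "P i (x i) - P i (y i) \<in> perp_sub p i"
      unfolding P_def by (intro subspace_diff[OF perp_sub_subspace] proj_in)
    then show "p i \<in> perp_sub p i" using pdef[OF i]
      by (simp add: subspace_scale[OF perp_sub_subspace])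
  qed
  have pnorm: "\<And>i. i<d \<Longrightarrow> p i \<bullet> p i = 1"
  proof -
    fix i assume i: "i<d"
    have "norm (p i) = 1" using pdef[OF i] lnorm[OF i] lpos[OF i] by simp
    then show "p i \<bullet> p i = 1" by (simp add: norm_eq_1)
  qed
  have porth: "\<And>i j. i<d \<Longrightarrow> j<d \<Longrightarrow> p i \<bullet> p j = (if i = j then 1 else 0)"
  proof -
    fix i j assume i: "i<d" and j: "j<d"
    show "p i \<bullet> p j = (if i = j then 1 else 0)"
    proof (cases "i = j")
      case True then show ?thesis using pnorm i by simp
    next
      case False
      then consider "i < j" | "j < i" by linarith
      then show ?thesis
      proof cases
        case 1 then show ?thesis using pin[OF j] False by (simp add: perp_sub_def)
      next
        case 2
        then have "p j \<bullet> p i = 0" using pin[OF i] by (simp add: perp_sub_def)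
        then show ?thesis using False by (simp add: inner_commute)
      qed
    qed
  qed
  define e where "e i = x i - y i" for i
  have Kc: "compact K" unfolding assms(3) by (intro compact_convex_hull finite_imp_compact) auto
  have Kcv: "convex K" unfolding assms(3) by simp
  have E_ge: "\<And>k i. i \<le> k \<Longrightarrow> k<d \<Longrightarrow> p k \<bullet> e i = l i * (p k \<bullet> p i)"
  proof -
    fix k i assume ik: "i \<le> k" and k: "k<d"
    have pk: "p k \<in> perp_sub p i" using perp_sub_mono[OF ik] pin[OF k] by auto
    have "p k \<bullet> e i = p k \<bullet> x i - p k \<bullet> y i" by (simp add: e_def inner_diff_right)
    also have "\<dots> = p k \<bullet> (P i (x i) - P i (y i))"
      using proj_orth[OF pk, of "x i"] proj_orth[OF pk, of "y i"] by (simp add: P_def inner_diff_right)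
    also have "\<dots> = l i * (p k \<bullet> p i)" using Pdiff ik k by simp
    finally show "p k \<bullet> e i = l i * (p k \<bullet> p i)" .
  qed
  have E_lt: "\<And>k i. k < i \<Longrightarrow> i<d \<Longrightarrow> \<bar>p k \<bullet> e i\<bar> \<le> l k"
  proof -
    fix k i assume ki: "k < i" and i: "i<d"
    have k: "k < d" using ki i by simp
    have pk: "p k \<in> perp_sub p k" using pin[OF k] .
    have "p k \<bullet> e i = p k \<bullet> (P k (x i) - P k (y i))"
      using proj_orth[OF pk, of "x i"] proj_orth[OF pk, of "y i"]
      by (simp add: P_def e_def inner_diff_right)
    also have "\<bar>\<dots>\<bar> \<le> norm (p k) * norm (P k (x i) - P k (y i))" by (rule Cauchy_Schwarz_ineq2)
    also have "norm (p k) = 1" using pnorm[OF k] by (simp add: norm_eq_1)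
    also have "norm (P k (x i) - P k (y i)) = dist (P k (x i)) (P k (y i))" by (simp add: dist_norm)
    also have "\<dots> \<le> diameter (P k ` K)"
      using xK[OF i] yK[OF i] proj_bounded[OF Kc] by (intro diameter_bounded_bound) (auto simp: P_def)
    also have "\<dots> = l k" using ldiam[OF k] by simp
    finally show "\<bar>p k \<bullet> e i\<bar> \<le> l k" by simp
  qed
  define \<beta> :: real where "\<beta> = 1 / 2 ^ (2 * (d - 1))"
  define \<gamma> :: real where "\<gamma> = \<beta> / 2"
  define \<sigma> :: real where "\<sigma> = 1 / (2 * real d)"
  have g0: "\<gamma> \<ge> 0" by (simp add: \<gamma>_def \<beta>_def)
  have dpow: "real d \<le> 2 ^ (d - 1)"
  proof -
    have "d - 1 < 2 ^ (d - 1)" by (rule less_exp)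
    then have "d \<le> 2 ^ (d - 1)" by linarith
    then show ?thesis by (metis of_nat_le_iff of_nat_numeral of_nat_power)
  qed
  have gbound: "real d * (\<gamma> * 2 ^ (d - 1)) \<le> 1/2"
  proof -
    have "(2::real) ^ (2 * (d - 1)) = 2^(d-1) * 2^(d-1)" by (simp add: power_add[symmetric] mult_2)
    then have "real d * (\<gamma> * 2 ^ (d - 1)) = real d / (2 * 2^(d-1))"
      by (simp add: \<gamma>_def \<beta>_def)
    also have "\<dots> \<le> 1/2" using dpow by (simp add: field_simps)
    finally show ?thesis .
  qed
  define a where "a = (\<Sum>i<d. (1 / real d) *\<^sub>R y i) + (\<Sum>j<d. \<sigma> *\<^sub>R e j) - (\<Sum>k<d. (\<gamma> * l k) *\<^sub>R p k)"
  have box: "a + (\<Sum>i<d. t i *\<^sub>R p i) \<in> K" if t: "\<forall>i<d. 0 \<le> t i \<and> t i \<le> l i / 2 ^ (2 * (d - 1))" for t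
  proof -
    define \<delta> where "\<delta> k = t k - \<gamma> * l k" for k
    have db: "\<And>k. k<d \<Longrightarrow> \<bar>\<delta> k\<bar> \<le> \<gamma> * l k"
    proof -
      fix k assume k: "k < d"
      have "0 \<le> t k" "t k \<le> 2 * (\<gamma> * l k)" using t k by (auto simp: \<gamma>_def \<beta>_def)
      then show "\<bar>\<delta> k\<bar> \<le> \<gamma> * l k" by (simp add: \<delta>_def abs_le_iff)
    qed
    obtain r where r: "\<forall>i<d. l i * r i + (\<Sum>j\<in>{i<..<d}. (p i \<bullet> e j) * r j) = \<delta> i \<and> \<bar>r i\<bar> \<le> \<gamma> * 2^(d-1)"
      using backsub[of d l "\<lambda>i j. p i \<bullet> e j" \<delta> \<gamma>] lpos E_lt db g0 by blast
    define w where "w = (\<Sum>j<d. r j *\<^sub>R e j) - (\<Sum>k<d. \<delta> k *\<^sub>R p k)"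
    have wo: "p k \<bullet> w = 0" if k: "k < d" for k
    proof -
      have split: "{..<d} = {..<k} \<union> ({k} \<union> {k<..<d})" using k by auto
      have "p k \<bullet> (\<Sum>j<d. r j *\<^sub>R e j) = (\<Sum>j<d. r j * (p k \<bullet> e j))"
        by (simp add: inner_sum_right)
      also have "\<dots> = (\<Sum>j<k. r j * (p k \<bullet> e j)) + (r k * (p k \<bullet> e k) + (\<Sum>j\<in>{k<..<d}. r j * (p k \<bullet> e j)))"
        unfolding split by (subst sum.union_disjoint, auto)+
      also have "(\<Sum>j<k. r j * (p k \<bullet> e j)) = 0"
        using E_ge k porth by (intro sum.neutral) auto
      also have "p k \<bullet> e k = l k" using E_ge[of k k] k pnorm by simp
      also have "r k * l k + (\<Sum>j\<in>{k<..<d}. r j * (p k \<bullet> e j)) = \<delta> k"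
        using r k by (simp add: mult.commute)
      finally have 1: "p k \<bullet> (\<Sum>j<d. r j *\<^sub>R e j) = \<delta> k" by simp
      have "p k \<bullet> (\<Sum>j<d. \<delta> j *\<^sub>R p j) = (\<Sum>j<d. \<delta> j * (if k = j then 1 else 0))"
        using porth k by (simp add: inner_sum_right)
      also have "\<dots> = \<delta> k" using k by (simp add: if_distrib cong: if_cong)
      finally show ?thesis using 1 by (simp add: w_def inner_diff_right)
    qed
    have w0: "w = 0"
    proof (rule ccontr)
      assume wn: "w \<noteq> 0"
      let ?S = "insert w (p ` {..<d})"
      have inj: "inj_on p {..<d}"
        by (rule inj_onI) (metis lessThan_iff porth pnorm zero_neq_one)
      have wnot: "w \<notin> p ` {..<d}" using wo pnorm by (metis imageE lessThan_iff zero_neq_one)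
      have "pairwise orthogonal ?S"
        unfolding pairwise_def orthogonal_def using wo porth
        by (auto simp: inner_commute)
      moreover have "0 \<notin> ?S" using wn pnorm by (metis imageE inner_zero_left insertE lessThan_iff zero_neq_one)
      ultimately have "independent ?S" by (rule pairwise_orthogonal_independent)
      then have "card ?S \<le> DIM('a)" by (rule independent_bound[THEN conjunct2])
      moreover have "card ?S = d + 1" using wnot inj by (simp add: card_image)
      ultimately show False by (simp add: d_def)
    qed
    define s where "s i = \<sigma> + r i" for i
    have sb: "0 \<le> real d * s i \<and> real d * s i \<le> 1" if i: "i < d" for i
    proof -
      have "\<bar>real d * r i\<bar> \<le> real d * (\<gamma> * 2^(d-1))" using r i by (simp add: abs_mult mult_left_mono)
      then have "\<bar>real d * r i\<bar> \<le> 1/2" using gbound by linarith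
      moreover have "real d * s i = 1/2 + real d * r i" using d2 by (simp add: s_def \<sigma>_def field_simps)
      ultimately show ?thesis by (simp only:) (auto simp: abs_le_iff)
    qed
    define z where "z i = (1 - real d * s i) *\<^sub>R y i + (real d * s i) *\<^sub>R x i" for i
    have zK: "z i \<in> K" if i: "i < d" for i
      unfolding z_def using sb[OF i] xK[OF i] yK[OF i] Kcv by (intro convexD) auto
    have avg: "(\<Sum>i<d. (1 / real d) *\<^sub>R z i) \<in> K"
      using d2 zK by (intro convex_sum[OF _ Kcv]) auto
    have "(\<Sum>i<d. (1 / real d) *\<^sub>R z i) = (\<Sum>i<d. (1 / real d) *\<^sub>R y i + s i *\<^sub>R e i)"
      using d2 by (intro sum.cong) (auto simp: z_def e_def algebra_simps)
    also have "\<dots> = (\<Sum>i<d. (1 / real d) *\<^sub>R y i) + (\<Sum>j<d. \<sigma> *\<^sub>R e j) + (\<Sum>j<d. r j *\<^sub>R e j)"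
      by (simp add: s_def sum.distrib scaleR_add_left)
    also have "(\<Sum>j<d. r j *\<^sub>R e j) = (\<Sum>k<d. \<delta> k *\<^sub>R p k)" using w0 by (simp add: w_def)
    also have "(\<Sum>k<d. \<delta> k *\<^sub>R p k) = (\<Sum>k<d. t k *\<^sub>R p k) - (\<Sum>k<d. (\<gamma> * l k) *\<^sub>R p k)"
      by (simp add: \<delta>_def scaleR_diff_left sum_subtractf)
    finally have "(\<Sum>i<d. (1 / real d) *\<^sub>R z i) = a + (\<Sum>i<d. t i *\<^sub>R p i)"
      by (simp add: a_def algebra_simps)
    then show ?thesis using avg by simp
  qed
  show ?thesis unfolding d_def[symmetric]
    using porth box by blast
qed

end
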